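(* Let $\mathbf{X}\in\mathbb{R}^{n\times p}$, $\mathbf{Y}\in\mathbb{R}^n$, let $\{1,\dots,p\}$ be partitioned into disjoint groups $\mathcal{G}_1,\dots,\mathcal{G}_K$, and fix $\widetilde\lambda_{\mathrm{init}}>0$. Define $$\mathbf{M}=\Big(\tfrac{\mathbf{X}^\top\mathbf{X}}{n}+\widetilde\lambda_{\mathrm{init}}\mathbf{I}\Big)^{-1}\tfrac{\mathbf{X}^\top\mathbf{X}}{n},\qquad \mathbf{N}=\tfrac{1}{\sqrt n}\Big(\tfrac{\mathbf{X}^\top\mathbf{X}}{n}+\widetilde\lambda_{\mathrm{init}}\mathbf{I}\Big)^{-1}\mathbf{X}^\top,\qquad \widetilde{\mathbf{w}}=\Big(\tfrac{\mathbf{X}^\top\mathbf{X}}{n}+\widetilde\lambda_{\mathrm{init}}\mathbf{I}\Big)^{-1}\tfrac{\mathbf{X}^\top\mathbf{Y}}{n},$$ the $K\times K$ matrix $\mathbf{A}$ with entries $A_{gh}=\|\mathbf{M}_{\mathcal{G}_g,\mathcal{G}_h}\|_F^2/n$, and vectors $\widehat{\mathbf u},\mathbf v\in\mathbb{R}^K$ with $\widehat u_g=\|\widetilde{\mathbf w}_{\mathcal{G}_g}\|_2^2$ and $v_g=\|\mathbf N_{\mathcal G_g,\cdot}\|_F^2/n$. For $\mathbb{s}>0$ let $$\widehat{\mathbf d}(\mathbb{s})=\operatorname{argmin}_{\mathbf d\in[0,\infty)^K}\Big\|\mathbf A\mathbf d-\frac{\widehat{\mathbf u}}{\mathbb{s}^2}+\mathbf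 v\Big\|_2^2,\qquad \widehat\lambda_g(\mathbb{s})=1/\widehat d_g(\mathbb{s})\in(0,\infty]$$ (with $1/0=\infty$). Assume $\mathbf A$ is invertible and $\widehat u_g>0$ for all $g$. Then: 1. If $\mathbb{s}^2\ge\max_g\{\widehat u_g/v_g\}$, then $\widehat\lambda_g(\mathbb{s})=\infty$ for all $g$, i.e. the group ridge estimator $\widehat{\mathbf w}(\widehat{\boldsymbol\lambda}(\mathbb{s}))=0$. 2. As $\mathbb{s}\to0$, $\min_g\widehat\lambda_g(\mathbb{s})\to0$. 3. If $\mathbb{s}_1,\mathbb{s}_2>0$ satisfy $\mathcal S(\mathbb{s}_1)=\mathcal S(\mathbb{s}_2)=:\mathcal S$, where $\mathcal S(\mathbb{s})=\{g:\widehat\lambda_g(\mathbb{s})<\infty\}$, then for every $g\in\mathcal S$, $$\widehat\lambda_g(\mathbb{s}_1)=\Big\{\frac{\mathbb{s}_2^2}{\mathbb{s}_1^2}\widehat\lambda_g(\mathbb{s}_2)^{-1}+\Big(\frac{\mathbb{s}_2^2}{\mathbb{s}_1^2}-1\Big)\tilde v_{\mathcal S,g}\Big\}^{-1},\qquad \tilde v_{\mathcal S,g}=\Big((\mathbf A_{\cdot,\mathcal S}^\top\mathbf A_{\cdot,\mathcal S})^{-1}\mathbf A_{\cdot,\mathcal S}^\top\mathbf v\Big)_g .$$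
   Context: For a matrix $\mathbf B$, $\mathbf B_{\mathcal G_g,\mathcal G_h}$ denotes the submatrix with rows indexed by $\mathcal G_g$ and columns by $\mathcal G_h$, $\mathbf B_{\mathcal G_g,\cdot}$ the rows indexed by $\mathcal G_g$, and $\mathbf A_{\cdot,\mathcal S}$ the columns of $\mathbf A$ indexed by $\mathcal S$; $\mathbf w_{\mathcal G_g}=(w_j)_{j\in\mathcal G_g}$. The vector $(\mathbf A_{\cdot,\mathcal S}^\top\mathbf A_{\cdot,\mathcal S})^{-1}\mathbf A_{\cdot,\mathcal S}^\top\mathbf v$ is indexed by $\mathcal S$. For $\boldsymbol\lambda\in(0,\infty]^K$, the group ridge estimator is $\widehat{\mathbf w}(\boldsymbol\lambda)\in\operatorname{argmin}_{\mathbf w}\{\frac{1}{2n}\sum_i(Y_i-x_i^\top\mathbf w)^2+\sum_g\frac{\lambda_g}{2}\|\mathbf w_{\mathcal G_g}\|_2^2\}$, with $x_i^\top$ the rows of $\mathbf X$, where $\lambda_g=\infty$ forces $\mathbf w_{\mathcal G_g}=0$. *)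

theory Defs
  imports "HOL-Analysis.Analysis" "HOL-Library.Extended_Real"
begin

text \<open>Data: X :: real^'p^'n (n rows, p columns), Y :: real^'n, n = CARD('n).
  Groups: G :: 'k \<Rightarrow> 'p set, a partition of the column index type 'p.\<close>

definition gram_reg :: "real^'p^'n \<Rightarrow> real \<Rightarrow> real^'p^'p" where
  "gram_reg X li = (1 / real CARD('n)) *\<^sub>R (transpose X ** X) + li *\<^sub>R mat 1"

definition Mmat :: "real^'p^'n \<Rightarrow> real \<Rightarrow> real^'p^'p" where
  "Mmat X li = matrix_inv (gram_reg X li) ** ((1 / real CARD('n)) *\<^sub>R (transpose X ** X))"

definition Nmat :: "real^'p^'n \<Rightarrow> real \<Rightarrow> real^'n^'p" where
  "Nmat X li = (1 / sqrt (real CARD('n))) *\<^sub>R (matrix_inv (gram_reg X li) ** transpose X)"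

definition wtilde :: "real^'p^'n \<Rightarrow> real^'n \<Rightarrow> real \<Rightarrow> real^'p" where
  "wtilde X Y li = matrix_inv (gram_reg X li) *v ((1 / real CARD('n)) *\<^sub>R (transpose X *v Y))"

definition Amat :: "real^'p^'n \<Rightarrow> real \<Rightarrow> ('k \<Rightarrow> 'p set) \<Rightarrow> real^'k^'k" where
  "Amat X li G = (\<chi> g h. (\<Sum>i\<in>G g. \<Sum>j\<in>G h. (Mmat X li $ i $ j)\<^sup>2) / real CARD('n))"

definition uhat :: "real^'p^'n \<Rightarrow> real^'n \<Rightarrow> real \<Rightarrow> ('k \<Rightarrow> 'p set) \<Rightarrow> real^'k" where
  "uhat X Y li G = (\<chi> g. \<Sum>j\<in>G g. (wtilde X Y li $ j)\<^sup>2)"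

definition vvec :: "real^'p^'n \<Rightarrow> real \<Rightarrow> ('k \<Rightarrow> 'p set) \<Rightarrow> real^'k" where
  "vvec X li G = (\<chi> g. (\<Sum>i\<in>G g. \<Sum>j\<in>UNIV. (Nmat X li $ i $ j)\<^sup>2) / real CARD('n))"

definition dobj :: "real^'k^'k \<Rightarrow> real^'k \<Rightarrow> real^'k \<Rightarrow> real \<Rightarrow> real^'k \<Rightarrow> real" where
  "dobj A u v s d = (norm (A *v d - (1 / s\<^sup>2) *\<^sub>R u + v))\<^sup>2"

definition is_dhat :: "real^'k^'k \<Rightarrow> real^'k \<Rightarrow> real^'k \<Rightarrow> real \<Rightarrow> real^'k \<Rightarrow> bool" where
  "is_dhat A u v s d \<longleftrightarrow> (\<forall>g. 0 \<le> d $ g) \<and>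
     (\<forall>d'. (\<forall>g. 0 \<le> d' $ g) \<longrightarrow> dobj A u v s d \<le> dobj A u v s d')"

definition lam_of :: "real \<Rightarrow> ereal" where
  "lam_of d = (if d = 0 then \<infinity> else ereal (1 / d))"

text \<open>\<open>((A_{.,S}^T A_{.,S})^{-1} A_{.,S}^T v)\<close>, indexed by S (extended by 0 outside S):
  the unique solution supported on S of the normal equations
  \<open>A_{.,S}^T (A_{.,S} z_S - v) = 0\<close>.\<close>
definition ls_coef :: "real^'k^'k \<Rightarrow> 'k set \<Rightarrow> real^'k \<Rightarrow> real^'k" where
  "ls_coef A S v = (THE z. (\<forall>g. g \<notin> S \<longrightarrow> z $ g = 0) \<and>
      (\<forall>h\<in>S. (transpose A *v (A *v z - v)) $ h = 0))"

definition ridge_feasible :: "('k \<Rightarrow> 'p set) \<Rightarrow> ('k \<Rightarrow> ereal) \<Rightarrow> real^'p \<Rightarrow> bool" where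
  "ridge_feasible G lam w \<longleftrightarrow> (\<forall>g. lam g = \<infinity> \<longrightarrow> (\<forall>j\<in>G g. w $ j = 0))"

definition ridge_obj :: "real^'p^'n \<Rightarrow> real^'n \<Rightarrow> ('k \<Rightarrow> 'p set) \<Rightarrow> ('k \<Rightarrow> ereal) \<Rightarrow> real^'p \<Rightarrow> real" where
  "ridge_obj X Y G lam w =
     (1 / (2 * real CARD('n))) * (\<Sum>i\<in>UNIV. (Y $ i - (X $ i) \<bullet> w)\<^sup>2)
     + (\<Sum>g\<in>{g. lam g \<noteq> \<infinity>}. real_of_ereal (lam g) / 2 * (\<Sum>j\<in>G g. (w $ j)\<^sup>2))"

definition is_group_ridge :: "real^'p^'n \<Rightarrow> real^'n \<Rightarrow> ('k \<Rightarrow> 'p set) \<Rightarrow> ('k \<Rightarrow> ereal) \<Rightarrow> real^'p \<Rightarrow> bool" where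
  "is_group_ridge X Y G lam w \<longleftrightarrow> ridge_feasible G lam w \<and>
     (\<forall>w'. ridge_feasible G lam w' \<longrightarrow> ridge_obj X Y G lam w \<le> ridge_obj X Y G lam w')"

end

theory Submission
  imports Defs
begin

lemma inner_transpose: "inner x (transpose A *v y) = inner (A *v x) (y::real^'m)"
  for x :: "real^'n" and A :: "real^'n^'m"
proof -
  have "inner x (transpose A *v y) = (\<Sum>i\<in>UNIV. \<Sum>j\<in>UNIV. x $ i * (A $ j $ i * y $ j))"
    by (simp add: inner_vec_def matrix_vector_mult_def transpose_def sum_distrib_left)
  also have "\<dots> = (\<Sum>j\<in>UNIV. \<Sum>i\<in>UNIV. x $ i * (A $ j $ i * y $ j))"
    by (rule sum.swap)
  also have "\<dots> = inner (A *v x) y"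
    by (simp add: inner_vec_def matrix_vector_mult_def sum_distrib_left mult_ac)
  finally show ?thesis .
qed

lemma inv_mulvec_zero:
  fixes A :: "real^'k^'k"
  assumes "invertible A" "A *v x = 0" shows "x = 0"
proof -
  obtain B where "B ** A = mat 1" using assms(1) unfolding invertible_def by blast
  then have "x = B *v (A *v x)" by (simp add: matrix_vector_mul_assoc)
  then show ?thesis using assms(2) by simp
qed

lemma inv_row_nonzero:
  fixes A :: "real^'k^'k"
  assumes "invertible A" shows "\<exists>h. A $ g $ h \<noteq> 0"
proof (rule ccontr)
  assume "\<not> ?thesis"
  then have z: "\<And>h. A $ g $ h = 0" by blast
  obtain B where "A ** B = mat 1" using assms(1) unfolding invertible_def by blast
  then have "(A ** B) $ g $ g = 1" by (simp add: mat_def)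
  then show False by (simp add: matrix_matrix_mult_def z)
qed

lemma A_nonneg: "Amat X li G $ g $ h \<ge> 0"
  unfolding Amat_def by (simp add: sum_nonneg)

lemma M_eq_N: "Mmat X li = (1 / sqrt (real CARD('n))) *\<^sub>R (Nmat X li ** (X::real^'p^'n))"
proof -
  have "(1 / sqrt (real CARD('n))) * (1 / sqrt (real CARD('n))) = 1 / real CARD('n)"
    by (simp add: real_sqrt_mult[symmetric])
  then show ?thesis
    unfolding Mmat_def Nmat_def
    by (simp add: matrix_mul_assoc scalar_matrix_assoc matrix_scalar_ac)
qed

lemma v_pos:
  assumes "invertible (Amat X li G)"
  shows "vvec X li G $ g > 0"
proof (rule ccontr)
  have nn: "0 \<le> vvec X li G $ g" by (simp add: vvec_def sum_nonneg)
  assume "\<not> ?thesis"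
  then have "vvec X li G $ g = 0" using nn by simp
  then have s0: "(\<Sum>i\<in>G g. \<Sum>j\<in>UNIV. (Nmat X li $ i $ j)\<^sup>2) = 0" by (simp add: vvec_def)
  have "\<forall>i\<in>G g. (\<Sum>j\<in>UNIV. (Nmat X li $ i $ j)\<^sup>2) = 0"
    using s0 by (subst (asm) sum_nonneg_eq_0_iff) (auto intro: sum_nonneg)
  then have N0: "\<And>i j. i \<in> G g \<Longrightarrow> Nmat X li $ i $ j = 0"
    by (simp add: sum_nonneg_eq_0_iff)
  have M0: "\<And>i j. i \<in> G g \<Longrightarrow> Mmat X li $ i $ j = 0"
    by (simp add: M_eq_N matrix_matrix_mult_def N0)
  have "\<And>h. Amat X li G $ g $ h = 0" by (simp add: Amat_def M0)
  then show False using inv_row_nonzero[OF assms, of g] by blast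
qed

lemma dobj_sum: "dobj A u v s d = (\<Sum>g\<in>UNIV. ((A *v d) $ g - u $ g / s\<^sup>2 + v $ g)\<^sup>2)"
  unfolding dobj_def power2_norm_eq_inner inner_vec_def by (simp add: power2_eq_square)

lemma dobj_dir:
  "dobj A u v s (d + t *\<^sub>R e) = dobj A u v s d
     + 2 * t * inner (A *v e) (A *v d - (1 / s\<^sup>2) *\<^sub>R u + v) + t\<^sup>2 * inner (A *v e) (A *v e)"
proof -
  define r where "r = A *v d - (1 / s\<^sup>2) *\<^sub>R u + v"
  have "A *v (d + t *\<^sub>R e) - (1 / s\<^sup>2) *\<^sub>R u + v = r + t *\<^sub>R (A *v e)"
    by (simp add: r_def matrix_vector_right_distrib matrix_vector_mult_scaleR)
  then have "dobj A u v s (d + t *\<^sub>R e) = inner (r + t *\<^sub>R (A *v e)) (r + t *\<^sub>R (A *v e))"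
    unfolding dobj_def by (simp add: power2_norm_eq_inner)
  also have "\<dots> = inner r r + 2 * t * inner (A *v e) r + t\<^sup>2 * inner (A *v e) (A *v e)"
    by (simp add: inner_add inner_commute algebra_simps power2_eq_square)
  finally show ?thesis unfolding dobj_def r_def by (simp add: power2_norm_eq_inner)
qed

lemma quad_pos:
  fixes a c :: real
  assumes "\<forall>t>0. 0 \<le> 2*t*c + t\<^sup>2*a" "a \<ge> 0" shows "c \<ge> 0"
proof (rule ccontr)
  assume "\<not> c \<ge> 0"
  then have c: "c < 0" by simp
  define t where "t = - c / (a + 1)"
  have t: "t > 0" using c assms(2) by (simp add: t_def field_simps)
  have "t * a < - c" using c assms(2) unfolding t_def by (simp add: field_simps)
  then have "2*c + t*a < 0" using c by linarith
  then have "t * (2*c + t*a) < 0" using t by (simp add: mult_pos_neg)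
  moreover have "0 \<le> 2*t*c + t\<^sup>2*a" using assms(1) t by blast
  ultimately show False by (simp add: algebra_simps power2_eq_square)
qed

lemma quad_zero:
  fixes a c :: real
  assumes "\<delta> > 0" "\<forall>t. -\<delta> < t \<longrightarrow> 0 \<le> 2*t*c + t\<^sup>2*a" "a \<ge> 0" shows "c = 0"
proof -
  have "c \<ge> 0" using quad_pos[of c a] assms by force
  moreover have "c \<le> 0"
  proof (rule ccontr)
    assume "\<not> c \<le> 0"
    then have c: "c > 0" by simp
    define t where "t = - min (\<delta>/2) (c / (a + 1))"
    have t: "t < 0" "-\<delta> < t" using c assms by (auto simp: t_def)
    have "- t * a \<le> c / (a+1) * a" using assms(3) unfolding t_def
      by (intro mult_right_mono) auto
    also have "\<dots> < c" using c assms(3) by (simp add: field_simps)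
    finally have "2*c + t*a > 0" using c by linarith
    then have "t * (2*c + t*a) < 0" using t by (simp add: mult_neg_pos)
    moreover have "0 \<le> 2*t*c + t\<^sup>2*a" using assms(2) t by blast
    ultimately show False by (simp add: algebra_simps power2_eq_square)
  qed
  ultimately show ?thesis by simp
qed

lemma Av_nonneg:
  fixes A :: "real^'k^'k"
  assumes "\<And>g h. A $ g $ h \<ge> 0" "\<And>g. d $ g \<ge> 0"
  shows "(A *v d) $ g \<ge> 0"
  using assms by (simp add: matrix_vector_mult_def sum_nonneg)

lemma zero_opt:
  fixes A :: "real^'k^'k"
  assumes nonneg: "\<And>g h. A $ g $ h \<ge> 0" and inv: "invertible A"
    and b: "\<And>g. u $ g / s\<^sup>2 \<le> v $ g" and dh: "is_dhat A u v s d"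
  shows "d = 0"
proof -
  have d0: "\<And>g. d $ g \<ge> 0" using dh by (simp add: is_dhat_def)
  have "dobj A u v s d \<le> dobj A u v s 0" using dh by (simp add: is_dhat_def)
  then have le: "(\<Sum>g\<in>UNIV. ((A *v d) $ g - u $ g / s\<^sup>2 + v $ g)\<^sup>2)
      \<le> (\<Sum>g\<in>UNIV. (- u $ g / s\<^sup>2 + v $ g)\<^sup>2)"
    by (simp add: dobj_sum)
  have ge: "((A *v d) $ g - u $ g / s\<^sup>2 + v $ g)\<^sup>2 \<ge> (- u $ g / s\<^sup>2 + v $ g)\<^sup>2 + ((A *v d) $ g)\<^sup>2" for g
  proof -
    have "(A *v d) $ g \<ge> 0" using Av_nonneg[OF nonneg d0] .
    moreover have "v $ g - u $ g / s\<^sup>2 \<ge> 0" using b[of g] by simp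
    ultimately have "0 \<le> (A *v d) $ g * (v $ g - u $ g / s\<^sup>2)" by simp
    moreover have "(A *v d) $ g - u $ g / s\<^sup>2 + v $ g = (A *v d) $ g + (v $ g - u $ g / s\<^sup>2)" by simp
    moreover have "- u $ g / s\<^sup>2 + v $ g = v $ g - u $ g / s\<^sup>2" by simp
    moreover have "\<And>a c::real. 0 \<le> a * c \<Longrightarrow> c\<^sup>2 + a\<^sup>2 \<le> (a + c)\<^sup>2"
      by (simp add: power2_sum)
    ultimately show ?thesis by metis
  qed
  have "(\<Sum>g\<in>UNIV. (- u $ g / s\<^sup>2 + v $ g)\<^sup>2 + ((A *v d) $ g)\<^sup>2)
     \<le> (\<Sum>g\<in>UNIV. ((A *v d) $ g - u $ g / s\<^sup>2 + v $ g)\<^sup>2)"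
    by (rule sum_mono) (rule ge)
  with le have "(\<Sum>g\<in>UNIV. ((A *v d) $ g)\<^sup>2) \<le> 0" by (simp add: sum.distrib)
  then have "(\<Sum>g\<in>UNIV. ((A *v d) $ g)\<^sup>2) = 0" by (meson order_antisym sum_nonneg zero_le_power2)
  then have "\<forall>g. (A *v d) $ g = 0" by (simp add: sum_nonneg_eq_0_iff)
  then have "A *v d = 0" by (simp add: vec_eq_iff)
  then show ?thesis using inv_mulvec_zero[OF inv] by blast
qed

lemma grow:
  fixes A :: "real^'k^'k"
  assumes nonneg: "\<And>g h. A $ g $ h \<ge> 0" and dh: "is_dhat A u v s d"
  defines "r \<equiv> A *v (\<chi> i. 1)"
  shows "\<exists>g. d $ g * inner r r \<ge> inner r u / s\<^sup>2 - inner r v"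
proof -
  have d0: "\<And>g. d $ g \<ge> 0" using dh by (simp add: is_dhat_def)
  define D where "D = Max (range (\<lambda>g. d $ g))"
  have "D \<in> range (\<lambda>g. d $ g)" unfolding D_def by (rule Max_in) auto
  then obtain g0 where g0: "d $ g0 = D" by auto
  have dD: "\<And>g. d $ g \<le> D" unfolding D_def by simp
  have r0: "\<And>i. r $ i \<ge> 0" unfolding r_def using Av_nonneg[OF nonneg] by simp
  have "\<forall>t>0. 0 \<le> 2*t*inner r (A *v d - (1 / s\<^sup>2) *\<^sub>R u + v) + t\<^sup>2*inner r r"
  proof (intro allI impI)
    fix t :: real assume t: "t > 0"
    have "\<forall>g. 0 \<le> (d + t *\<^sub>R (\<chi> i. 1)) $ g" using d0 t by simp
    then have "dobj A u v s d \<le> dobj A u v s (d + t *\<^sub>R (\<chi> i. 1))"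
      using dh unfolding is_dhat_def by blast
    then show "0 \<le> 2*t*inner r (A *v d - (1 / s\<^sup>2) *\<^sub>R u + v) + t\<^sup>2*inner r r"
      unfolding dobj_dir r_def by simp
  qed
  then have c: "0 \<le> inner r (A *v d - (1 / s\<^sup>2) *\<^sub>R u + v)"
    by (rule quad_pos) simp
  have Ad: "(A *v d) $ i \<le> r $ i * D" for i
  proof -
    have "(A *v d) $ i = (\<Sum>h\<in>UNIV. A $ i $ h * d $ h)" by (simp add: matrix_vector_mult_def)
    also have "\<dots> \<le> (\<Sum>h\<in>UNIV. A $ i $ h * D)"
      by (rule sum_mono) (simp add: dD mult_left_mono nonneg)
    also have "\<dots> = r $ i * D" by (simp add: r_def matrix_vector_mult_def sum_distrib_right)
    finally show ?thesis .
  qed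
  have "inner r (A *v d) = (\<Sum>i\<in>UNIV. r $ i * (A *v d) $ i)" by (simp add: inner_vec_def)
  also have "\<dots> \<le> (\<Sum>i\<in>UNIV. r $ i * (r $ i * D))"
    by (rule sum_mono) (simp add: Ad r0 mult_left_mono)
  also have "\<dots> = D * inner r r" by (simp add: inner_vec_def sum_distrib_left mult_ac)
  finally have "inner r (A *v d) \<le> D * inner r r" .
  moreover have "inner r (A *v d - (1 / s\<^sup>2) *\<^sub>R u + v) = inner r (A *v d) - inner r u / s\<^sup>2 + inner r v"
    by (simp add: inner_add_right inner_diff_right)
  ultimately have "D * inner r r \<ge> inner r u / s\<^sup>2 - inner r v" using c by linarith
  then show ?thesis using g0 by auto
qed

lemma kkt:
  fixes A :: "real^'k^'k"
  assumes dh: "is_dhat A u v s d" and pos: "d $ h > 0"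
  shows "(transpose A *v (A *v d - (1 / s\<^sup>2) *\<^sub>R u + v)) $ h = 0"
proof -
  have d0: "\<And>g. d $ g \<ge> 0" using dh by (simp add: is_dhat_def)
  define e :: "real^'k" where "e = axis h 1"
  define rr where "rr = A *v d - (1 / s\<^sup>2) *\<^sub>R u + v"
  have "\<forall>t. - d $ h < t \<longrightarrow> 0 \<le> 2*t*inner (A *v e) rr + t\<^sup>2*inner (A *v e) (A *v e)"
  proof (intro allI impI)
    fix t :: real assume t: "- d $ h < t"
    have "\<forall>g. 0 \<le> (d + t *\<^sub>R e) $ g" using d0 t by (simp add: e_def axis_def)
    then have "dobj A u v s d \<le> dobj A u v s (d + t *\<^sub>R e)"
      using dh unfolding is_dhat_def by blast
    then show "0 \<le> 2*t*inner (A *v e) rr + t\<^sup>2*inner (A *v e) (A *v e)"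
      unfolding dobj_dir rr_def by simp
  qed
  then have "inner (A *v e) rr = 0"
    by (rule quad_zero[OF pos]) simp
  then have "inner e (transpose A *v rr) = 0" by (simp only: inner_transpose)
  then show ?thesis unfolding e_def rr_def by (simp add: inner_axis')
qed

lemma ls_coef_eq:
  fixes A :: "real^'k^'k"
  assumes inv: "invertible A" and supp: "\<forall>g. g \<notin> S \<longrightarrow> z $ g = 0"
    and ne: "\<forall>h\<in>S. (transpose A *v (A *v z - v)) $ h = 0"
  shows "ls_coef A S v = z"
  unfolding ls_coef_def
proof (rule the_equality)
  show "(\<forall>g. g \<notin> S \<longrightarrow> z $ g = 0) \<and> (\<forall>h\<in>S. (transpose A *v (A *v z - v)) $ h = 0)"
    using supp ne by blast
next
  fix z' assume z': "(\<forall>g. g \<notin> S \<longrightarrow> z' $ g = 0) \<and> (\<forall>h\<in>S. (transpose A *v (A *v z' - v)) $ h = 0)"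
  define w where "w = z' - z"
  have eq: "transpose A *v (A *v w) = transpose A *v (A *v z' - v) - transpose A *v (A *v z - v)"
    by (simp add: w_def matrix_vector_mult_diff_distrib del: transpose_matrix_vector)
  have hz: "\<forall>h. w $ h * (transpose A *v (A *v w)) $ h = 0"
  proof
    fix h show "w $ h * (transpose A *v (A *v w)) $ h = 0"
    proof (cases "h \<in> S")
      case True then show ?thesis using z' ne by (simp add: eq del: transpose_matrix_vector)
    next
      case False then show ?thesis using z' supp by (simp add: w_def del: transpose_matrix_vector)
    qed
  qed
  have "inner w (transpose A *v (A *v w)) = 0" unfolding inner_vec_def
    by (rule sum.neutral) (simp only: inner_real_def hz, simp)
  then have "inner (A *v w) (A *v w) = 0" by (simp only: inner_transpose)
  then have "A *v w = 0" by simp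
  then have "w = 0" using inv_mulvec_zero[OF inv] by blast
  then show "z' = z" by (simp add: w_def)
qed

lemma lam_fin: "lam_of d < \<infinity> \<longleftrightarrow> d \<noteq> 0"
  by (simp add: lam_of_def)

lemma part3:
  fixes A :: "real^'k^'k"
  assumes inv: "invertible A" and dh1: "is_dhat A u v s1 d1" and dh2: "is_dhat A u v s2 d2"
    and s1: "s1 > 0" and s2: "s2 > 0" and same: "s1 = s2 \<Longrightarrow> d1 = d2"
    and Seq: "{g. lam_of (d1 $ g) < \<infinity>} = {g. lam_of (d2 $ g) < \<infinity>}"
    and g: "g \<in> {g. lam_of (d1 $ g) < \<infinity>}"
  shows "lam_of (d1 $ g) = ereal (inverse (s2\<^sup>2 / s1\<^sup>2 * inverse (real_of_ereal (lam_of (d2 $ g)))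
               + (s2\<^sup>2 / s1\<^sup>2 - 1) * ls_coef A {g. lam_of (d1 $ g) < \<infinity>} v $ g))"
proof -
  define S where "S = {g. lam_of (d1 $ g) < \<infinity>}"
  have S1: "S = {g. d1 $ g \<noteq> 0}" unfolding S_def using lam_fin by blast
  have S2: "S = {g. d2 $ g \<noteq> 0}" unfolding S_def Seq using lam_fin by blast
  have d10: "\<And>g. d1 $ g \<ge> 0" using dh1 by (simp add: is_dhat_def)
  have d20: "\<And>g. d2 $ g \<ge> 0" using dh2 by (simp add: is_dhat_def)
  have g1: "d1 $ g \<noteq> 0" and g2: "d2 $ g \<noteq> 0" using g S1 S2 unfolding S_def by auto
  have L1: "lam_of (d1 $ g) = ereal (1 / d1 $ g)" using g1 by (simp add: lam_of_def)
  have L2: "real_of_ereal (lam_of (d2 $ g)) = 1 / d2 $ g" using g2 by (simp add: lam_of_def)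
  show ?thesis
  proof (cases "s1 = s2")
    case True
    then show ?thesis using same L1 L2 s2 by (simp add: inverse_eq_divide)
  next
    case False
    define a where "a = s1\<^sup>2"
    define b where "b = s2\<^sup>2"
    have a: "a > 0" and b: "b > 0" using s1 s2 by (simp_all add: a_def b_def)
    have ab: "a \<noteq> b" using False s1 s2 unfolding a_def b_def
      by (metis less_eq_real_def power2_eq_imp_eq)
    define z where "z = (1 / (a - b)) *\<^sub>R (b *\<^sub>R d2 - a *\<^sub>R d1)"
    have supp: "\<forall>g. g \<notin> S \<longrightarrow> z $ g = 0" using S1 S2 by (auto simp: z_def)
    have ne: "\<forall>h\<in>S. (transpose A *v (A *v z - v)) $ h = 0"
    proof
      fix h assume h: "h \<in> S"
      have "d1 $ h > 0" using h S1 d10[of h] by auto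
      from kkt[OF dh1 this] have k1:
        "(transpose A *v (A *v d1)) $ h - (transpose A *v u) $ h / a + (transpose A *v v) $ h = 0"
        by (simp add: a_def matrix_vector_mult_diff_distrib matrix_vector_right_distrib
            matrix_vector_mult_scaleR del: transpose_matrix_vector)
      have "d2 $ h > 0" using h S2 d20[of h] by auto
      from kkt[OF dh2 this] have k2:
        "(transpose A *v (A *v d2)) $ h - (transpose A *v u) $ h / b + (transpose A *v v) $ h = 0"
        by (simp add: b_def matrix_vector_mult_diff_distrib matrix_vector_right_distrib
            matrix_vector_mult_scaleR del: transpose_matrix_vector)
      have e: "(transpose A *v (A *v z - v)) $ h =
         (b * (transpose A *v (A *v d2)) $ h - a * (transpose A *v (A *v d1)) $ h) / (a - b)
          - (transpose A *v v) $ h"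
        by (simp add: z_def matrix_vector_mult_diff_distrib matrix_vector_right_distrib
            matrix_vector_mult_scaleR del: transpose_matrix_vector; simp add: field_simps)
      show "(transpose A *v (A *v z - v)) $ h = 0"
        unfolding e using k1 k2 a b ab by (simp add: field_simps; simp add: algebra_simps)
    qed
    have ls: "ls_coef A S v = z" by (rule ls_coef_eq[OF inv supp ne])
    have "b / a * d2 $ g + (b / a - 1) * ((b * d2 $ g - a * d1 $ g) / (a - b)) = d1 $ g"
      using a b ab by (simp add: field_simps; simp add: algebra_simps)
    moreover have zg: "z $ g = (b * d2 $ g - a * d1 $ g) / (a - b)" by (simp add: z_def)
    ultimately have inn: "b / a * inverse (1 / d2 $ g) + (b / a - 1) * z $ g = d1 $ g" by simp
    show ?thesis unfolding S_def[symmetric] ls L1 L2 a_def[symmetric] b_def[symmetric] inn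
      by (simp add: inverse_eq_divide)
  qed
qed

lemma lam_nonneg: "d \<ge> 0 \<Longrightarrow> lam_of d \<ge> 0"
  by (simp add: lam_of_def)

theorem proposition1:
  fixes X :: "real^'p::finite^'n::finite" and Y :: "real^'n"
    and G :: "'k::finite \<Rightarrow> 'p set" and li :: real
    and dhat :: "real \<Rightarrow> real^'k"
  assumes part_disj: "\<And>g h. g \<noteq> h \<Longrightarrow> G g \<inter> G h = {}"
    and part_cover: "(\<Union>g. G g) = UNIV"
    and part_ne: "\<And>g. G g \<noteq> {}"
    and li_pos: "li > 0"
    and A_inv: "invertible (Amat X li G)"
    and u_pos: "\<And>g. uhat X Y li G $ g > 0"
    and dhat_def: "\<And>s. s > 0 \<Longrightarrow> is_dhat (Amat X li G) (uhat X Y li G) (vvec X li G) s (dhat s)"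
  shows
    "(\<forall>s>0. s\<^sup>2 \<ge> Max (range (\<lambda>g. uhat X Y li G $ g / vvec X li G $ g)) \<longrightarrow>
        (\<forall>g. lam_of (dhat s $ g) = \<infinity>) \<and>
        (\<forall>w. is_group_ridge X Y G (\<lambda>g. lam_of (dhat s $ g)) w \<longleftrightarrow> w = 0))
   \<and> ((\<lambda>s. Min (range (\<lambda>g. lam_of (dhat s $ g)))) \<longlongrightarrow> (0::ereal)) (at_right 0)
   \<and> (\<forall>s1 s2. s1 > 0 \<longrightarrow> s2 > 0 \<longrightarrow>
        {g. lam_of (dhat s1 $ g) < \<infinity>} = {g. lam_of (dhat s2 $ g) < \<infinity>} \<longrightarrow>
        (\<forall>g\<in>{g. lam_of (dhat s1 $ g) < \<infinity>}.
           lam_of (dhat s1 $ g) =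
             ereal (inverse (s2\<^sup>2 / s1\<^sup>2 * inverse (real_of_ereal (lam_of (dhat s2 $ g)))
               + (s2\<^sup>2 / s1\<^sup>2 - 1) *
                 ls_coef (Amat X li G) {g. lam_of (dhat s1 $ g) < \<infinity>} (vvec X li G) $ g))))"
proof (intro conjI)
  let ?A = "Amat X li G" and ?u = "uhat X Y li G" and ?v = "vvec X li G"
  have nonneg: "\<And>g h. ?A $ g $ h \<ge> 0" by (rule A_nonneg)
  have vpos: "\<And>g. ?v $ g > 0" using v_pos[OF A_inv] .
  show "\<forall>s>0. s\<^sup>2 \<ge> Max (range (\<lambda>g. ?u $ g / ?v $ g)) \<longrightarrow>
        (\<forall>g. lam_of (dhat s $ g) = \<infinity>) \<and>
        (\<forall>w. is_group_ridge X Y G (\<lambda>g. lam_of (dhat s $ g)) w \<longleftrightarrow> w = 0)"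
  proof (intro allI impI)
    fix s :: real assume s: "s > 0" and sM: "s\<^sup>2 \<ge> Max (range (\<lambda>g. ?u $ g / ?v $ g))"
    have b: "?u $ g / s\<^sup>2 \<le> ?v $ g" for g
    proof -
      have "?u $ g / ?v $ g \<le> Max (range (\<lambda>g. ?u $ g / ?v $ g))" by simp
      then have "?u $ g / ?v $ g \<le> s\<^sup>2" using sM by linarith
      then have "?u $ g \<le> s\<^sup>2 * ?v $ g" using vpos[of g] by (simp add: divide_le_eq mult.commute)
      then show ?thesis using s by (simp add: divide_le_eq mult.commute)
    qed
    have d0: "dhat s = 0" by (rule zero_opt[OF nonneg A_inv b dhat_def[OF s]])
    have lam: "\<forall>g. lam_of (dhat s $ g) = \<infinity>" by (simp add: d0 lam_of_def)
    have feas: "ridge_feasible G (\<lambda>g. lam_of (dhat s $ g)) w \<longleftrightarrow> w = 0" for w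
    proof
      assume "ridge_feasible G (\<lambda>g. lam_of (dhat s $ g)) w"
      then have "\<forall>g. \<forall>j\<in>G g. w $ j = 0" using lam unfolding ridge_feasible_def by simp
      moreover have "\<forall>j. \<exists>g. j \<in> G g" using part_cover by blast
      ultimately show "w = 0" by (metis vec_eq_iff zero_index)
    next
      assume "w = 0" then show "ridge_feasible G (\<lambda>g. lam_of (dhat s $ g)) w"
        by (simp add: ridge_feasible_def)
    qed
    show "(\<forall>g. lam_of (dhat s $ g) = \<infinity>) \<and>
        (\<forall>w. is_group_ridge X Y G (\<lambda>g. lam_of (dhat s $ g)) w \<longleftrightarrow> w = 0)"
      using lam feas unfolding is_group_ridge_def by auto
  qed
next
  let ?A = "Amat X li G" and ?u = "uhat X Y li G" and ?v = "vvec X li G"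
  have nonneg: "\<And>g h. ?A $ g $ h \<ge> 0" by (rule A_nonneg)
  define r where "r = ?A *v (\<chi> i. 1)"
  have r0: "\<And>i. r $ i \<ge> 0" unfolding r_def using Av_nonneg[OF nonneg] by simp
  obtain g0 where "\<exists>h. ?A $ g0 $ h \<noteq> 0" using inv_row_nonzero[OF A_inv] by blast
  then obtain h0 where h0: "?A $ g0 $ h0 > 0" using nonneg by (metis less_eq_real_def)
  have rg0: "r $ g0 > 0"
  proof -
    have "?A $ g0 $ h0 \<le> (\<Sum>h\<in>UNIV. ?A $ g0 $ h)"
      by (rule member_le_sum) (auto simp: nonneg)
    then show ?thesis using h0 by (simp add: r_def matrix_vector_mult_def)
  qed
  define \<alpha> where "\<alpha> = inner r ?u"
  define \<beta> where "\<beta> = inner r ?v"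
  define \<gamma> where "\<gamma> = inner r r"
  have \<alpha>: "\<alpha> > 0" unfolding \<alpha>_def inner_vec_def
    by (rule sum_pos2[of UNIV g0]) (auto simp: rg0 u_pos r0 less_imp_le)
  have \<gamma>: "\<gamma> > 0" unfolding \<gamma>_def inner_vec_def
    by (rule sum_pos2[of UNIV g0]) (auto simp: rg0 r0)
  have grow': "\<exists>g. dhat s $ g * \<gamma> \<ge> \<alpha> / s\<^sup>2 - \<beta>" if "s > 0" for s
    using grow[OF nonneg dhat_def[OF that]] unfolding \<alpha>_def \<beta>_def \<gamma>_def r_def .
  show "((\<lambda>s. Min (range (\<lambda>g. lam_of (dhat s $ g)))) \<longlongrightarrow> (0::ereal)) (at_right 0)"
    unfolding order_tendsto_iff
  proof (intro conjI allI impI)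
    fix l :: ereal assume l: "l < 0"
    show "\<forall>\<^sub>F s in at_right 0. l < Min (range (\<lambda>g. lam_of (dhat s $ g)))"
      using eventually_at_right_less[of "0::real"]
    proof (rule eventually_mono)
      fix s :: real assume s: "0 < s"
      have "\<And>g. dhat s $ g \<ge> 0" using dhat_def[OF s] by (simp add: is_dhat_def)
      then have "\<And>g. lam_of (dhat s $ g) \<ge> 0" by (rule lam_nonneg)
      then show "l < Min (range (\<lambda>g. lam_of (dhat s $ g)))" using l
        by (auto intro: less_le_trans)
    qed
  next
    fix U :: ereal assume U: "U > 0"
    obtain e where e: "0 < ereal e" "ereal e < U" using ereal_dense2[OF U] by blast
    have e0: "e > 0" using e by simp
    define K where "K = \<bar>\<beta>\<bar> + \<gamma> / e + 1"
    have K: "K > 0" unfolding K_def using \<gamma> e0 by (simp add: add_nonneg_pos)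
    define \<delta> where "\<delta> = min 1 (\<alpha> / K)"
    have \<delta>: "\<delta> > 0" unfolding \<delta>_def using \<alpha> K by simp
    show "\<forall>\<^sub>F s in at_right 0. Min (range (\<lambda>g. lam_of (dhat s $ g))) < U"
      unfolding eventually_at_right[OF zero_less_one]
    proof (intro exI[of _ \<delta>] conjI allI impI \<delta>)
      fix s :: real assume s: "0 < s" "s < \<delta>"
      have "s < 1" using s unfolding \<delta>_def by simp
      then have "s\<^sup>2 < s" using s by (simp add: power2_eq_square)
      then have "s\<^sup>2 < \<alpha> / K" using s unfolding \<delta>_def by simp
      then have "K * s\<^sup>2 < \<alpha>" using K by (simp add: field_simps)
      then have aK: "\<alpha> / s\<^sup>2 > K" using s by (simp add: field_simps)
      obtain g where g: "dhat s $ g * \<gamma> \<ge> \<alpha> / s\<^sup>2 - \<beta>" using grow'[OF s(1)] by blast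
      have "dhat s $ g * \<gamma> > \<gamma> / e" using g aK unfolding K_def by linarith
      then have "\<gamma> * (1 / e) < \<gamma> * dhat s $ g" by (simp add: mult.commute)
      then have dg: "dhat s $ g > 1 / e" using \<gamma> mult_less_cancel_left_pos by blast
      then have dpos: "dhat s $ g > 0" using e0 by (meson less_trans zero_less_divide_1_iff)
      have "1 / dhat s $ g < e" using dg dpos e0 by (simp add: field_simps)
      then have "lam_of (dhat s $ g) < ereal e" using dpos by (simp add: lam_of_def)
      then have "Min (range (\<lambda>g. lam_of (dhat s $ g))) < ereal e"
        by (meson Min_le finite UNIV_I finite_imageI image_eqI le_less_trans)
      then show "Min (range (\<lambda>g. lam_of (dhat s $ g))) < U" using e(2) by simp
    qed
  qed
next
  show "\<forall>s1 s2. s1 > 0 \<longrightarrow> s2 > 0 \<longrightarrow>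
        {g. lam_of (dhat s1 $ g) < \<infinity>} = {g. lam_of (dhat s2 $ g) < \<infinity>} \<longrightarrow>
        (\<forall>g\<in>{g. lam_of (dhat s1 $ g) < \<infinity>}.
           lam_of (dhat s1 $ g) =
             ereal (inverse (s2\<^sup>2 / s1\<^sup>2 * inverse (real_of_ereal (lam_of (dhat s2 $ g)))
               + (s2\<^sup>2 / s1\<^sup>2 - 1) *
                 ls_coef (Amat X li G) {g. lam_of (dhat s1 $ g) < \<infinity>} (vvec X li G) $ g)))"
  proof (intro allI impI ballI)
    fix s1 s2 :: real and g
    assume s1: "s1 > 0" and s2: "s2 > 0"
      and Seq: "{g. lam_of (dhat s1 $ g) < \<infinity>} = {g. lam_of (dhat s2 $ g) < \<infinity>}"
      and g: "g \<in> {g. lam_of (dhat s1 $ g) < \<infinity>}"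
    show "lam_of (dhat s1 $ g) =
             ereal (inverse (s2\<^sup>2 / s1\<^sup>2 * inverse (real_of_ereal (lam_of (dhat s2 $ g)))
               + (s2\<^sup>2 / s1\<^sup>2 - 1) *
                 ls_coef (Amat X li G) {g. lam_of (dhat s1 $ g) < \<infinity>} (vvec X li G) $ g))"
      by (rule part3[OF A_inv dhat_def[OF s1] dhat_def[OF s2] s1 s2 _ Seq g]) simp
  qed
qed

end
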